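(* Any parallel MTTKRP algorithm on $P$ processors, each with local memory of size $M$, in which the $IR$ $N$-ary multiplies are distributed among the processors, involves some processor performing at least \[ \frac{1}{3^{2-1/N}}\,\frac{N I R}{P\,M^{1-1/N}} - M \] sends and receives.
   Context: MTTKRP: Fix integers $N\ge 2$, $I_1,\dots,I_N\ge1$, $R\ge1$, and a mode $n\in[N]$; let $I=I_1I_2\cdots I_N$. Inputs are an $N$-way tensor $\mathcal{X}$ of dimensions $I_1\times\cdots\times I_N$ and matrices $A^{(k)}$ of size $I_k\times R$ for $k\in[N]\setminus\{n\}$; the output is the $I_n\times R$ matrix $B^{(n)}$ with $B^{(n)}(i_n,r)=\sum \mathcal{X}(i_1,\dots,i_N)\prod_{k\ne n}A^{(k)}(i_k,r)$, the sum over all $(i_1,\dots,i_N)$ with $n$-th entry $i_n$; values come from an arbitrary set with two binary operations (no algebraic laws assumed). Each point of the iteration space $[I_1]\times\cdots\times[I_N]\times[R]$ corresponds to one atomic $N$-ary multiply, which must be performed by some processor, and the products are accumulated by binary additions. Parallel model: $P$ processors, each with a local memory holding at most $M$ values, connected by a network; a processor operates only on values in its local memory; communication consists of sends and receives of individual values. *)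

theory Defs
  imports Complex_Main "HOL-Library.Multiset"
begin

text \<open>Symbolic (free-term) model of values: since no algebraic laws are assumed,
a value is identified with the expression that produced it.
Indices are 0-based: a multi-index is a list i of length N with i!k < dims!k,
modes are 0..N-1, columns are 0..R-1.\<close>

datatype val =
    XIn "nat list"
  | AIn nat nat nat           \<comment> \<open>AIn k i r = factor entry A^(k)(i,r)\<close>
  | Prod "nat list" nat       \<comment> \<open>result of the N-ary multiply at iteration point (i,r)\<close>
  | Plus val val

fun is_input :: "val \<Rightarrow> bool" where
  "is_input (XIn _) = True"
| "is_input (AIn _ _ _) = True"
| "is_input _ = False"

fun pure_sum :: "val \<Rightarrow> bool" where
  "pure_sum (Prod _ _) = True"
| "pure_sum (Plus a b) = (pure_sum a \<and> pure_sum b)"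
| "pure_sum _ = False"

fun prods :: "val \<Rightarrow> (nat list \<times> nat) multiset" where
  "prods (Prod i r) = {#(i, r)#}"
| "prods (Plus a b) = prods a + prods b"
| "prods _ = {#}"

definition idx_space :: "nat list \<Rightarrow> nat list set" where
  "idx_space dims = {i. length i = length dims \<and> (\<forall>k<length dims. i ! k < dims ! k)}"

text \<open>t is a correct value of the output entry B^(n)(j,r): a sum tree (any bracketing)
containing each product of that output exactly once.\<close>
definition computes_output :: "nat list \<Rightarrow> nat \<Rightarrow> nat \<Rightarrow> nat \<Rightarrow> val \<Rightarrow> bool" where
  "computes_output dims n j r t \<longleftrightarrow>
     pure_sum t \<and> prods t = mset_set ((\<lambda>i. (i, r)) ` {i \<in> idx_space dims. i ! n = j})"

datatype instr =
    Send nat val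
  | Recv val
  | Mult "nat list" nat
  | Add val val
  | Del val

definition is_comm :: "instr \<Rightarrow> bool" where
  "is_comm ins \<longleftrightarrow> (case ins of Send _ _ \<Rightarrow> True | Recv _ \<Rightarrow> True | _ \<Rightarrow> False)"

text \<open>Global state: local memories, and the set of (destination, value) messages sent so far.
A parallel execution is modelled as an interleaving of events (processor, instruction).\<close>
type_synonym state = "(nat \<Rightarrow> val set) \<times> (nat \<times> val) set"

fun step :: "nat list \<Rightarrow> nat \<Rightarrow> nat \<Rightarrow> nat \<Rightarrow> state \<Rightarrow> nat \<times> instr \<Rightarrow> state option" where
  "step dims R n P (mem, sent) (p, Send q v) =
     (if p < P \<and> q < P \<and> v \<in> mem p then Some (mem, insert (q, v) sent) else None)"
| "step dims R n P (mem, sent) (p, Recv v) =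
     (if p < P \<and> (p, v) \<in> sent then Some (mem(p := insert v (mem p)), sent) else None)"
| "step dims R n P (mem, sent) (p, Mult i r) =
     (if p < P \<and> i \<in> idx_space dims \<and> r < R \<and> XIn i \<in> mem p
         \<and> (\<forall>k<length dims. k \<noteq> n \<longrightarrow> AIn k (i ! k) r \<in> mem p)
      then Some (mem(p := insert (Prod i r) (mem p)), sent) else None)"
| "step dims R n P (mem, sent) (p, Add a b) =
     (if p < P \<and> a \<in> mem p \<and> b \<in> mem p \<and> \<not> is_input a \<and> \<not> is_input b
      then Some (mem(p := insert (Plus a b) (mem p)), sent) else None)"
| "step dims R n P (mem, sent) (p, Del v) =
     (if p < P then Some (mem(p := mem p - {v}), sent) else None)"

definition mem_ok :: "nat \<Rightarrow> nat \<Rightarrow> (nat \<Rightarrow> val set) \<Rightarrow> bool" where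
  "mem_ok P M mem \<longleftrightarrow> (\<forall>p<P. finite (mem p) \<and> card (mem p) \<le> M)"

fun run :: "nat list \<Rightarrow> nat \<Rightarrow> nat \<Rightarrow> nat \<Rightarrow> nat \<Rightarrow> state \<Rightarrow> (nat \<times> instr) list \<Rightarrow> state option" where
  "run dims R n P M s [] = Some s"
| "run dims R n P M s (e # es) =
     (case step dims R n P s e of
        None \<Rightarrow> None
      | Some s' \<Rightarrow> if mem_ok P M (fst s') then run dims R n P M s' es else None)"

definition is_mttkrp_alg ::
  "nat list \<Rightarrow> nat \<Rightarrow> nat \<Rightarrow> nat \<Rightarrow> nat \<Rightarrow> (nat \<Rightarrow> val set) \<Rightarrow> (nat \<times> instr) list \<Rightarrow> bool" where
  "is_mttkrp_alg dims R n P M mem0 es \<longleftrightarrow>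
     mem_ok P M mem0 \<and> (\<forall>p<P. \<forall>v\<in>mem0 p. is_input v) \<and>
     (\<exists>s. run dims R n P M (mem0, {}) es = Some s \<and>
          (\<forall>j<dims ! n. \<forall>r<R. \<exists>p<P. \<exists>t\<in>fst s p. computes_output dims n j r t))"

definition comm_count :: "(nat \<times> instr) list \<Rightarrow> nat \<Rightarrow> nat" where
  "comm_count es p = length (filter (\<lambda>(q, ins). q = p \<and> is_comm ins) es)"

end

theory Submission
  imports Defs "HOL-Analysis.Convex"
begin


lemma card_lists_le:
  assumes "\<forall>k<N. finite (S k)"
  shows "card {i::nat list. length i = N \<and> (\<forall>k<N. i!k \<in> S k)} \<le> (\<Prod>k<N. card (S k))"
proof -
  let ?L = "{i::nat list. length i = N \<and> (\<forall>k<N. i!k \<in> S k)}"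
  let ?g = "\<lambda>i::nat list. restrict (\<lambda>k. i!k) {..<N}"
  have inj: "inj_on ?g ?L"
  proof (rule inj_onI)
    fix a b assume "a \<in> ?L" "b \<in> ?L" "?g a = ?g b"
    then show "a = b"
      by (intro nth_equalityI) (auto simp: restrict_def fun_eq_iff split: if_splits)
  qed
  have sub: "?g ` ?L \<subseteq> PiE {..<N} S" by (intro image_subsetI) (simp add: restrict_PiE_iff)
  have fin: "finite (PiE {..<N} S)" using assms by (intro finite_PiE) auto
  have "card ?L = card (?g ` ?L)" using inj by (simp add: card_image)
  also have "\<dots> \<le> card (PiE {..<N} S)" by (intro card_mono fin sub)
  also have "\<dots> = (\<Prod>k<N. card (S k))" by (simp add: card_PiE)
  finally show ?thesis .
qed

lemma finite_lists_S:
  assumes "\<forall>k<N. finite (S k)"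
  shows "finite {i::nat list. length i = N \<and> (\<forall>k<N. i!k \<in> S k)}"
proof -
  let ?L = "{i::nat list. length i = N \<and> (\<forall>k<N. i!k \<in> S k)}"
  let ?g = "\<lambda>i::nat list. restrict (\<lambda>k. i!k) {..<N}"
  have inj: "inj_on ?g ?L"
  proof (rule inj_onI)
    fix a b assume "a \<in> ?L" "b \<in> ?L" "?g a = ?g b"
    then show "a = b"
      by (intro nth_equalityI) (auto simp: restrict_def fun_eq_iff split: if_splits)
  qed
  have sub: "?g ` ?L \<subseteq> PiE {..<N} S" by (intro image_subsetI) (simp add: restrict_PiE_iff)
  have fin: "finite (PiE {..<N} S)" using assms by (intro finite_PiE) auto
  show ?thesis using finite_subset[OF sub fin] inj by (rule finite_imageD)
qed

lemma min_powr:
  fixes g x p N :: real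
  assumes "0 \<le> g" "g \<le> x" "g \<le> p" "N \<ge> 1"
  shows "g \<le> x powr (1 - 1/N) * p powr (1/N)"
proof (cases "g = 0")
  case True then show ?thesis by simp
next
  case False
  then have gp: "g > 0" using assms by simp
  have e1: "0 \<le> 1 - 1/N" using assms by (simp add: divide_le_eq)
  have e2: "0 \<le> 1/N" using assms by simp
  have "g powr (1 - 1/N) * g powr (1/N) = g powr ((1 - 1/N) + 1/N)"
    by (rule powr_add[symmetric])
  also have "\<dots> = g" using gp by simp
  finally have "g = g powr (1 - 1/N) * g powr (1/N)" by simp
  also have "\<dots> \<le> x powr (1 - 1/N) * p powr (1/N)"
    using assms gp e1 e2 by (intro mult_mono powr_mono2) auto
  finally show ?thesis .
qed

lemma combo:
  fixes X :: "nat list set" and C :: "nat \<Rightarrow> (nat\<times>nat) set" and G :: "(nat list \<times> nat) set"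
  assumes N1: "N \<ge> 1" and fX: "finite X" and fC: "\<forall>k<N. finite (C k)"
    and GS: "G \<subseteq> {(i,r). i\<in>X \<and> r<R \<and> length i = N \<and> (\<forall>k<N. (i!k,r) \<in> C k)}"
  shows "real (card G) \<le> real (card X) powr (1 - 1/N) * (\<Sum>k<N. real (card (C k))) / N"
proof -
  define c where "c k r = card {a. (a,r) \<in> C k}" for k r
  define Gr where "Gr r = {i. (i,r) \<in> G}" for r
  have fS: "finite {a. (a,r) \<in> C k}" if "k<N" for k r
  proof (rule finite_subset)
    show "{a. (a,r) \<in> C k} \<subseteq> fst ` C k"
    proof
      fix a assume "a \<in> {a. (a,r) \<in> C k}"
      then show "a \<in> fst ` C k" by (intro image_eqI[where x="(a,r)"]) auto
    qed
    show "finite (fst ` C k)" using fC that by simp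
  qed
  have fG: "finite G"
  proof (rule finite_subset)
    show "G \<subseteq> X \<times> {..<R}" using GS by blast
    show "finite (X \<times> {..<R})" using fX by simp
  qed
  have fGr: "finite (Gr r)" for r
  proof (rule finite_subset)
    show "Gr r \<subseteq> fst ` G"
    proof
      fix a assume "a \<in> Gr r"
      then show "a \<in> fst ` G" unfolding Gr_def by (intro image_eqI[where x="(a,r)"]) auto
    qed
    show "finite (fst ` G)" using fG by simp
  qed
  have "G \<subseteq> (\<Union>r<R. (\<lambda>i. (i,r)) ` Gr r)"
  proof
    fix x assume x: "x \<in> G"
    obtain i r where xe: "x = (i,r)" by (cases x)
    have "r < R" using x xe GS by blast
    moreover have "i \<in> Gr r" using x xe by (simp add: Gr_def)
    ultimately show "x \<in> (\<Union>r<R. (\<lambda>i. (i,r)) ` Gr r)" using xe by blast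
  qed
  hence "card G \<le> card (\<Union>r<R. (\<lambda>i. (i,r)) ` Gr r)"
    using fGr by (intro card_mono) auto
  also have "\<dots> \<le> (\<Sum>r<R. card ((\<lambda>i. (i,r)) ` Gr r))" by (rule card_UN_le) simp
  also have "\<dots> \<le> (\<Sum>r<R. card (Gr r))" by (intro sum_mono card_image_le fGr)
  finally have c1: "real (card G) \<le> (\<Sum>r<R. real (card (Gr r)))" by (simp flip: of_nat_sum)
  have each: "real (card (Gr r)) \<le> real (card X) powr (1 - 1/N) * ((\<Sum>k<N. real (c k r)) / N)" for r
  proof -
    have "Gr r \<subseteq> X" using GS by (auto simp: Gr_def)
    hence g1: "card (Gr r) \<le> card X" using fX by (rule card_mono[rotated])
    have "Gr r \<subseteq> {i::nat list. length i = N \<and> (\<forall>k<N. i!k \<in> {a. (a,r) \<in> C k})}"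
      using GS by (auto simp: Gr_def)
    hence "card (Gr r) \<le> card {i::nat list. length i = N \<and> (\<forall>k<N. i!k \<in> {a. (a,r) \<in> C k})}"
      by (intro card_mono finite_lists_S) (use fS in auto)
    also have "\<dots> \<le> (\<Prod>k<N. c k r)" unfolding c_def using fS by (intro card_lists_le) auto
    finally have g2: "real (card (Gr r)) \<le> (\<Prod>k<N. real (c k r))" by (simp flip: of_nat_prod)
    have "real (card (Gr r)) \<le> real (card X) powr (1 - 1/N) * (\<Prod>k<N. real (c k r)) powr (1/N)"
      using g1 g2 N1 by (intro min_powr) auto
    also have "(\<Prod>k<N. real (c k r)) powr (1/N) \<le> (\<Sum>k<N. real (c k r) / card {..<N})"
      using arith_geom_mean[of "{..<N}" "\<lambda>k. real (c k r)"] N1 by (simp add: lessThan_empty_iff)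
    also have "(\<Sum>k<N. real (c k r) / card {..<N}) = (\<Sum>k<N. real (c k r)) / N"
      by (simp add: sum_divide_distrib)
    finally show ?thesis by (simp add: mult_left_mono)
  qed
  have ck: "(\<Sum>r<R. real (c k r)) \<le> real (card (C k))" if "k<N" for k
  proof -
    have "(\<Sum>r<R. c k r) = (\<Sum>r<R. card ((\<lambda>a. (a,r)) ` {a. (a,r) \<in> C k}))"
      unfolding c_def by (intro sum.cong refl) (simp add: card_image inj_on_def)
    also have "\<dots> = card (\<Union>r<R. (\<lambda>a. (a,r)) ` {a. (a,r) \<in> C k})"
      using fS[OF that] by (intro card_UN_disjoint[symmetric]) auto
    also have "\<dots> \<le> card (C k)" using fC that by (intro card_mono) auto
    finally show ?thesis by (simp flip: of_nat_sum)
  qed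
  have "real (card G) \<le> (\<Sum>r<R. real (card X) powr (1 - 1/N) * ((\<Sum>k<N. real (c k r)) / N))"
    using c1 sum_mono[of "{..<R}", OF each] by (rule order_trans)
  also have "\<dots> = real (card X) powr (1 - 1/N) * (\<Sum>r<R. \<Sum>k<N. real (c k r)) / N"
    by (simp add: sum_distrib_left sum_divide_distrib)
  also have "\<dots> = real (card X) powr (1 - 1/N) * (\<Sum>k<N. \<Sum>r<R. real (c k r)) / N"
    by (subst sum.swap) (rule refl)
  also have "\<dots> \<le> real (card X) powr (1 - 1/N) * (\<Sum>k<N. real (card (C k))) / N"
    using ck by (intro divide_right_mono mult_left_mono sum_mono) auto
  finally show ?thesis .
qed


lemma step_mem:
  assumes "step dims R n P s (p0,ins) = Some s'" "v \<in> fst s' q"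
  shows "v \<in> fst s q \<or> (q = p0 \<and> ((ins = Recv v \<and> (q,v) \<in> snd s) \<or> (\<exists>i r. ins = Mult i r \<and> v = Prod i r)
          \<or> (\<exists>a b. ins = Add a b \<and> v = Plus a b \<and> a \<in> fst s q \<and> b \<in> fst s q)))"
  using assms by (cases s; cases ins) (auto split: if_splits)

lemma step_sent:
  assumes "step dims R n P s (p0,ins) = Some s'" "(q,v) \<in> snd s'"
  shows "(q,v) \<in> snd s \<or> (ins = Send q v \<and> v \<in> fst s p0)"
  using assms by (cases s; cases ins) (auto split: if_splits)

lemma step_P:
  assumes "step dims R n P s (p0,ins) = Some s'"
  shows "p0 < P"
  using assms by (cases s; cases ins) (auto split: if_splits)

lemma step_mult:
  assumes "step dims R n P s (p0, Mult i r) = Some s'"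
  shows "i \<in> idx_space dims \<and> r < R \<and> XIn i \<in> fst s p0 \<and> (\<forall>k<length dims. k \<noteq> n \<longrightarrow> AIn k (i!k) r \<in> fst s p0)"
  using assms by (cases s) (auto split: if_splits)

lemma run_trace:
  "run dims R n P M s0 es = Some s \<Longrightarrow> \<exists>f. f 0 = s0 \<and> f (length es) = s \<and>
     (\<forall>\<tau><length es. step dims R n P (f \<tau>) (es!\<tau>) = Some (f (Suc \<tau>)) \<and> mem_ok P M (fst (f (Suc \<tau>))))"
proof (induction es arbitrary: s0)
  case Nil then show ?case by (intro exI[of _ "\<lambda>_. s0"]) auto
next
  case (Cons e es)
  from Cons.prems obtain s' where s': "step dims R n P s0 e = Some s'" "mem_ok P M (fst s')"
    "run dims R n P M s' es = Some s" by (auto split: option.splits if_splits)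
  from Cons.IH[OF s'(3)] obtain f where f: "f 0 = s'" "f (length es) = s"
    "\<forall>\<tau><length es. step dims R n P (f \<tau>) (es!\<tau>) = Some (f (Suc \<tau>)) \<and> mem_ok P M (fst (f (Suc \<tau>)))" by blast
  let ?g = "\<lambda>\<tau>. if \<tau> = 0 then s0 else f (\<tau> - 1)"
  show ?case
  proof (intro exI[of _ ?g] conjI allI impI)
    fix \<tau> assume "\<tau> < length (e # es)"
    then show "step dims R n P (?g \<tau>) ((e # es) ! \<tau>) = Some (?g (Suc \<tau>))"
      "mem_ok P M (fst (?g (Suc \<tau>)))"
      using f s' by (cases \<tau>; auto)+
  qed (use f in auto)
qed

fun subv :: "val \<Rightarrow> val set" where
  "subv (Plus a b) = insert (Plus a b) (subv a \<union> subv b)"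
| "subv v = {v}"

lemma subv_refl[simp]: "v \<in> subv v" by (cases v) auto

lemma subv_trans: "w \<in> subv v \<Longrightarrow> u \<in> subv w \<Longrightarrow> u \<in> subv v"
  by (induction v) auto

lemma subv_prods: "w \<in> subv v \<Longrightarrow> prods w \<subseteq># prods v"
  by (induction v) (auto intro: subset_mset.order_trans)

lemma subv_pure: "w \<in> subv v \<Longrightarrow> pure_sum v \<Longrightarrow> pure_sum w"
  by (induction v) auto

lemma pure_not_input: "pure_sum v \<Longrightarrow> \<not> is_input v" by (cases v) auto

locale exec =
  fixes dims :: "nat list" and R n P M :: nat and es :: "(nat \<times> instr) list" and f :: "nat \<Rightarrow> state"
  assumes stp: "\<And>\<tau>. \<tau> < length es \<Longrightarrow> step dims R n P (f \<tau>) (es!\<tau>) = Some (f (Suc \<tau>))"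
    and mok: "\<And>\<tau>. \<tau> \<le> length es \<Longrightarrow> mem_ok P M (fst (f \<tau>))"
    and init_in: "\<And>p v. p < P \<Longrightarrow> v \<in> fst (f 0) p \<Longrightarrow> is_input v"
    and init_sent: "snd (f 0) = {}"
begin

lemma input_prov:
  assumes "is_input x" "a \<le> t" "t \<le> length es" "x \<in> fst (f t) p"
  shows "x \<in> fst (f a) p \<or> (\<exists>\<tau>. a \<le> \<tau> \<and> \<tau> < t \<and> es!\<tau> = (p, Recv x))"
  using assms(2-4)
proof (induction t)
  case 0 then show ?case by simp
next
  case (Suc t)
  show ?case
  proof (cases "a = Suc t")
    case True then show ?thesis using Suc by simp
  next
    case False
    hence at: "a \<le> t" using Suc by simp
    obtain p0 ins where e: "es!t = (p0,ins)" by (cases "es!t")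
    have s: "step dims R n P (f t) (p0,ins) = Some (f (Suc t))" using stp[of t] Suc e by simp
    from step_mem[OF s Suc(4)] assms(1)
    consider "x \<in> fst (f t) p" | "p = p0" "ins = Recv x" by auto
    then show ?thesis
    proof cases
      case 1 then show ?thesis using Suc.IH at Suc by fastforce
    next
      case 2 then show ?thesis using e at by auto
    qed
  qed
qed

lemma sent_prov:
  assumes "\<tau> \<le> length es" "(q,v) \<in> snd (f \<tau>)"
  shows "\<exists>t'<\<tau>. \<exists>q'. es!t' = (q', Send q v) \<and> v \<in> fst (f t') q'"
  using assms
proof (induction \<tau>)
  case 0 then show ?case using init_sent by simp
next
  case (Suc t)
  obtain p0 ins where e: "es!t = (p0,ins)" by (cases "es!t")
  have s: "step dims R n P (f t) (p0,ins) = Some (f (Suc t))" using stp[of t] Suc e by simp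
  from step_sent[OF s Suc(3)] show ?case
  proof
    assume "(q,v) \<in> snd (f t)"
    then obtain t' q' where "t' < t" "es!t' = (q', Send q v)" "v \<in> fst (f t') q'"
      using Suc by auto
    then show ?thesis by (intro exI[of _ t']) auto
  next
    assume "ins = Send q v \<and> v \<in> fst (f t) p0"
    then show ?thesis using e by blast
  qed
qed


definition Sp where "Sp i r p t v \<tau>' \<longleftrightarrow> (\<exists>t' q' v'. t \<le> t' \<and> t' < \<tau>' \<and> es!t' = (p, Send q' v') \<and> v' \<in> subv v \<and> (i,r) \<in># prods v')"
definition Mp where "Mp i r p v \<tau>' \<longleftrightarrow> (\<exists>v'. v' \<in> subv v \<and> (i,r) \<in># prods v' \<and> v' \<in> fst (f \<tau>') p)"

lemma Mp_mono: "w \<in> subv v \<Longrightarrow> Mp i r p w \<tau>' \<Longrightarrow> Mp i r p v \<tau>'"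
  unfolding Mp_def using subv_trans by blast
lemma Sp_mono: "w \<in> subv v \<Longrightarrow> \<tau>1 \<le> \<tau>2 \<Longrightarrow> Sp i r p t w \<tau>1 \<Longrightarrow> Sp i r p t v \<tau>2"
  unfolding Sp_def using subv_trans by (meson order_less_le_trans)
lemma Mp_self: "v \<in> fst (f \<tau>') p \<Longrightarrow> (i,r) \<in># prods v \<Longrightarrow> Mp i r p v \<tau>'"
  unfolding Mp_def by (intro exI[of _ v]) auto

lemma back_flow:
  "\<tau> \<le> length es \<Longrightarrow> q < P \<Longrightarrow> v \<in> fst (f \<tau>) q \<Longrightarrow> pure_sum v \<Longrightarrow> (i,r) \<in># prods v \<Longrightarrow>
   \<exists>t p. t < \<tau> \<and> es!t = (p, Mult i r) \<and> (\<forall>\<tau>'. t < \<tau>' \<and> \<tau>' \<le> \<tau> \<longrightarrow> Mp i r p v \<tau>' \<or> Sp i r p t v \<tau>')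
     \<and> (q \<noteq> p \<longrightarrow> Sp i r p t v \<tau>)"
proof (induction \<tau> arbitrary: q v rule: less_induct)
  case (less \<tau>)
  show ?case
  proof (cases \<tau>)
    case 0
    then show ?thesis using less.prems init_in pure_not_input by blast
  next
    case (Suc t0)
    obtain p0 ins where e: "es!t0 = (p0,ins)" by (cases "es!t0")
    have t0l: "t0 < length es" using less.prems Suc by simp
    have s: "step dims R n P (f t0) (p0,ins) = Some (f (Suc t0))" using stp[OF t0l] e by simp
    have vin: "v \<in> fst (f (Suc t0)) q" using less.prems Suc by simp
    from step_mem[OF s vin]
    consider (old) "v \<in> fst (f t0) q"
      | (recv) "q = p0" "ins = Recv v" "(q,v) \<in> snd (f t0)"
      | (mult) i' r' where "q = p0" "ins = Mult i' r'" "v = Prod i' r'"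
      | (add) a b where "q = p0" "ins = Add a b" "v = Plus a b" "a \<in> fst (f t0) q" "b \<in> fst (f t0) q"
      by blast
    then show ?thesis
    proof cases
      case old
      from less.IH[of t0 q v] old less.prems Suc obtain t p where
        tp: "t < t0" "es!t = (p, Mult i r)" "\<forall>\<tau>'. t < \<tau>' \<and> \<tau>' \<le> t0 \<longrightarrow> Mp i r p v \<tau>' \<or> Sp i r p t v \<tau>'"
        "q \<noteq> p \<longrightarrow> Sp i r p t v t0" by auto
      have last: "Mp i r p v (Suc t0) \<or> Sp i r p t v (Suc t0)"
        using tp(4) Sp_mono[of v v t0 "Suc t0"] Mp_self[OF vin, of i r] less.prems by (cases "q = p") auto
      have "q \<noteq> p \<longrightarrow> Sp i r p t v (Suc t0)" using tp(4) Sp_mono[of v v t0 "Suc t0"] by auto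
      moreover have "\<forall>\<tau>'. t < \<tau>' \<and> \<tau>' \<le> Suc t0 \<longrightarrow> Mp i r p v \<tau>' \<or> Sp i r p t v \<tau>'"
      proof (intro allI impI)
        fix \<tau>' assume a: "t < \<tau>' \<and> \<tau>' \<le> Suc t0"
        show "Mp i r p v \<tau>' \<or> Sp i r p t v \<tau>'"
        proof (cases "\<tau>' \<le> t0")
          case True then show ?thesis using tp(3) a by blast
        next
          case False then have "\<tau>' = Suc t0" using a by simp
          then show ?thesis using last by simp
        qed
      qed
      ultimately show ?thesis using tp Suc by (intro exI[of _ t] exI[of _ p]) auto
    next
      case recv
      from sent_prov[of t0 q v] recv t0l obtain t'' q'' where
        t'': "t'' < t0" "es!t'' = (q'', Send q v)" "v \<in> fst (f t'') q''" by auto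
      have q''P: "q'' < P" using step_P[of dims R n P "f t''" q''] stp[of t''] t'' t0l by simp
      from less.IH[of t'' q'' v] t'' q''P less.prems Suc t0l obtain t p where
        tp: "t < t''" "es!t = (p, Mult i r)" "\<forall>\<tau>'. t < \<tau>' \<and> \<tau>' \<le> t'' \<longrightarrow> Mp i r p v \<tau>' \<or> Sp i r p t v \<tau>'"
        "q'' \<noteq> p \<longrightarrow> Sp i r p t v t''" by auto
      have late: "Sp i r p t v \<tau>'" if "t'' < \<tau>'" for \<tau>'
      proof (cases "q'' = p")
        case True
        then show ?thesis unfolding Sp_def using tp(1) t'' that less.prems
          by (intro exI[of _ t''] exI[of _ q] exI[of _ v]) auto
      next
        case False
        then show ?thesis using tp(4) Sp_mono[of v v t'' \<tau>'] that by auto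
      qed
      have "\<forall>\<tau>'. t < \<tau>' \<and> \<tau>' \<le> \<tau> \<longrightarrow> Mp i r p v \<tau>' \<or> Sp i r p t v \<tau>'"
      proof (intro allI impI)
        fix \<tau>' assume a: "t < \<tau>' \<and> \<tau>' \<le> \<tau>"
        show "Mp i r p v \<tau>' \<or> Sp i r p t v \<tau>'"
        proof (cases "\<tau>' \<le> t''")
          case True then show ?thesis using tp(3) a by blast
        next
          case False then show ?thesis using late by simp
        qed
      qed
      moreover have "Sp i r p t v \<tau>" using late t'' Suc by simp
      ultimately show ?thesis using tp t'' Suc by (intro exI[of _ t] exI[of _ p]) auto
    next
      case mult
      have ir: "(i,r) = (i',r')" using less.prems mult by simp
      have "\<forall>\<tau>'. t0 < \<tau>' \<and> \<tau>' \<le> \<tau> \<longrightarrow> Mp i r q v \<tau>' \<or> Sp i r q t0 v \<tau>'"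
      proof (intro allI impI)
        fix \<tau>' assume "t0 < \<tau>' \<and> \<tau>' \<le> \<tau>"
        hence "\<tau>' = Suc t0" using Suc by simp
        then show "Mp i r q v \<tau>' \<or> Sp i r q t0 v \<tau>'" using Mp_self[OF vin, of i r] less.prems by simp
      qed
      then show ?thesis using e mult ir Suc by (intro exI[of _ t0] exI[of _ q]) auto
    next
      case add
      obtain w where w: "w = a \<or> w = b" "(i,r) \<in># prods w" using less.prems add by auto
      have wsub: "w \<in> subv v" using w add by auto
      have wpure: "pure_sum w" using w add less.prems by auto
      have win: "w \<in> fst (f t0) q" using w add by auto
      from less.IH[of t0 q w] win wpure w less.prems Suc obtain t p where
        tp: "t < t0" "es!t = (p, Mult i r)" "\<forall>\<tau>'. t < \<tau>' \<and> \<tau>' \<le> t0 \<longrightarrow> Mp i r p w \<tau>' \<or> Sp i r p t w \<tau>'"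
        "q \<noteq> p \<longrightarrow> Sp i r p t w t0" by auto
      have last: "Mp i r p v (Suc t0) \<or> Sp i r p t v (Suc t0)"
        using tp(4) Sp_mono[OF wsub, of t0 "Suc t0"] Mp_self[OF vin, of i r] less.prems by (cases "q = p") auto
      have "q \<noteq> p \<longrightarrow> Sp i r p t v (Suc t0)" using tp(4) Sp_mono[OF wsub, of t0 "Suc t0"] by auto
      moreover have "\<forall>\<tau>'. t < \<tau>' \<and> \<tau>' \<le> Suc t0 \<longrightarrow> Mp i r p v \<tau>' \<or> Sp i r p t v \<tau>'"
      proof (intro allI impI)
        fix \<tau>' assume a: "t < \<tau>' \<and> \<tau>' \<le> Suc t0"
        show "Mp i r p v \<tau>' \<or> Sp i r p t v \<tau>'"
        proof (cases "\<tau>' \<le> t0")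
          case True
          then have "Mp i r p w \<tau>' \<or> Sp i r p t w \<tau>'" using tp(3) a by blast
          then show ?thesis using Mp_mono[OF wsub] Sp_mono[OF wsub order_refl] by blast
        next
          case False then have "\<tau>' = Suc t0" using a by simp
          then show ?thesis using last by simp
        qed
      qed
      ultimately show ?thesis using tp Suc by (intro exI[of _ t] exI[of _ p]) auto
    qed
  qed
qed

end


definition key :: "nat \<Rightarrow> val \<Rightarrow> nat \<times> nat" where
  "key n v = (let x = (SOME x. x \<in># prods v) in (fst x ! n, snd x))"

lemma key_eq:
  assumes "(i,r) \<in># prods v" "\<forall>x\<in>#prods v. fst x ! n = i!n \<and> snd x = r"
  shows "key n v = (i!n, r)"
proof -
  have "(SOME x. x \<in># prods v) \<in># prods v" using assms(1) by (rule someI)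
  then show ?thesis using assms(2) unfolding key_def Let_def by auto
qed

definition pc :: "nat \<Rightarrow> nat \<times> instr \<Rightarrow> bool" where
  "pc p = (\<lambda>(q, ins). q = p \<and> is_comm ins)"

definition cnt :: "(nat \<times> instr) list \<Rightarrow> nat \<Rightarrow> nat \<Rightarrow> nat" where
  "cnt es p \<tau> = length (filter (pc p) (take \<tau> es))"

lemma cnt_mono: "\<tau>1 \<le> \<tau>2 \<Longrightarrow> cnt es p \<tau>1 \<le> cnt es p \<tau>2"
proof -
  assume "\<tau>1 \<le> \<tau>2"
  then obtain d where "\<tau>2 = \<tau>1 + d" using le_Suc_ex by blast
  then show ?thesis unfolding cnt_def by (simp add: take_add)
qed

lemma cnt_Suc: "\<tau> < length es \<Longrightarrow> cnt es p (Suc \<tau>) = cnt es p \<tau> + (if pc p (es!\<tau>) then 1 else 0)"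
  unfolding cnt_def by (simp add: take_Suc_conv_app_nth)

lemma cnt_all: "cnt es p (length es) = comm_count es p"
  unfolding cnt_def comm_count_def pc_def by simp

lemma cnt_strict: "\<tau>1 < \<tau>2 \<Longrightarrow> \<tau>1 < length es \<Longrightarrow> pc p (es!\<tau>1) \<Longrightarrow> cnt es p \<tau>1 < cnt es p \<tau>2"
  using cnt_Suc[of \<tau>1 es p] cnt_mono[of "Suc \<tau>1" \<tau>2 es p] by simp

lemma card_comm_seg:
  assumes "M > 0"
  shows "card {\<tau>. \<tau> < length es \<and> pc p (es!\<tau>) \<and> cnt es p \<tau> div M = s} \<le> M"
proof -
  let ?T = "{\<tau>. \<tau> < length es \<and> pc p (es!\<tau>) \<and> cnt es p \<tau> div M = s}"
  have inj: "inj_on (cnt es p) ?T"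
  proof (rule inj_onI)
    fix x y assume x: "x \<in> ?T" and y: "y \<in> ?T" and e: "cnt es p x = cnt es p y"
    show "x = y"
    proof (rule ccontr)
      assume "x \<noteq> y"
      then consider "x < y" | "y < x" by linarith
      then show False using cnt_strict[of x y es p] cnt_strict[of y x es p] x y e by cases auto
    qed
  qed
  have sub: "cnt es p ` ?T \<subseteq> {s*M..<s*M+M}"
  proof
    fix c assume "c \<in> cnt es p ` ?T"
    then obtain \<tau> where "c = cnt es p \<tau>" "c div M = s" by auto
    moreover have "c div M * M + c mod M = c" by (rule div_mult_mod_eq)
    moreover have "c mod M < M" using assms by simp
    ultimately show "c \<in> {s*M..<s*M+M}" by auto
  qed
  have "card ?T = card (cnt es p ` ?T)" using inj by (simp add: card_image)
  also have "\<dots> \<le> card {s*M..<s*M+M}" by (intro card_mono sub) simp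
  finally show ?thesis by simp
qed


lemma final_arith:
  fixes x y m :: real and N :: nat
  assumes "0 \<le> x" "0 \<le> y" "x + y \<le> 3*m" "N \<ge> 1"
  shows "x powr (1 - 1/N) * y / N \<le> (3*m) powr (2 - 1/N) / N"
proof -
  have m: "0 \<le> 3*m" using assms by simp
  have e: "0 \<le> 1 - 1/real N" using assms by (simp add: divide_le_eq)
  have "x powr (1 - 1/N) \<le> (3*m) powr (1 - 1/N)" using assms e by (intro powr_mono2) auto
  hence "x powr (1 - 1/N) * y \<le> (3*m) powr (1 - 1/N) * (3*m)"
    using assms by (intro mult_mono) auto
  also have "\<dots> = (3*m) powr (2 - 1/N)"
  proof (cases "3*m = 0")
    case True then show ?thesis by simp
  next
    case False
    then have "(3*m) powr (1 - 1/N) * (3*m) = (3*m) powr (1 - 1/N) * (3*m) powr 1" using m by simp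
    also have "\<dots> = (3*m) powr ((1 - 1/N) + 1)" by (rule powr_add[symmetric])
    finally show ?thesis by (simp add: algebra_simps)
  qed
  finally show ?thesis by (simp add: divide_right_mono)
qed

context exec begin

lemma seg_bound:
  fixes p s :: nat and Gs :: "(nat list \<times> nat) set" and tm :: "nat list \<times> nat \<Rightarrow> nat"
  assumes pP: "p < P" and M0: "M > 0" and N1: "length dims \<ge> 1" and nN: "n < length dims"
    and tmG: "\<And>i r. (i,r) \<in> Gs \<Longrightarrow> tm (i,r) < length es \<and> es!tm (i,r) = (p, Mult i r) \<and> cnt es p (tm (i,r)) div M = s"
    and flow: "\<And>i r \<tau>'. (i,r) \<in> Gs \<Longrightarrow> tm (i,r) < \<tau>' \<Longrightarrow> \<tau>' \<le> length es \<Longrightarrow>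
        \<exists>v'. (i,r) \<in># prods v' \<and> (\<forall>x\<in>#prods v'. fst x ! n = i!n \<and> snd x = r) \<and>
          (v' \<in> fst (f \<tau>') p \<or> (\<exists>t' q. tm (i,r) \<le> t' \<and> t' < \<tau>' \<and> es!t' = (p, Send q v')))"
  shows "real (card Gs) \<le> (3 * real M) powr (2 - 1/length dims) / length dims"
proof (cases "Gs = {}")
  case True then show ?thesis by simp
next
  case False
  define N where "N = length dims"
  define sg where "sg \<tau> = cnt es p \<tau> div M" for \<tau>
  have sg_mono: "sg \<tau>1 \<le> sg \<tau>2" if "\<tau>1 \<le> \<tau>2" for \<tau>1 \<tau>2
    unfolding sg_def using cnt_mono[OF that] by (rule div_le_mono)
  define Ss where "Ss = {\<tau>. \<tau> \<le> length es \<and> sg \<tau> = s}"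
  have finSs: "finite Ss" unfolding Ss_def by simp
  have inSs: "tm (i,r) \<in> Ss \<and> Suc (tm (i,r)) \<in> Ss" if "(i,r) \<in> Gs" for i r
  proof -
    have t: "tm (i,r) < length es" "es!tm (i,r) = (p, Mult i r)" "cnt es p (tm (i,r)) div M = s"
      using tmG[OF that] by auto
    have "\<not> pc p (es!tm (i,r))" using t(2) by (simp add: pc_def is_comm_def)
    then have "cnt es p (Suc (tm (i,r))) = cnt es p (tm (i,r))" using cnt_Suc[OF t(1)] by simp
    then show ?thesis using t unfolding Ss_def sg_def by auto
  qed
  obtain i0 r0 where "(i0,r0) \<in> Gs" using False by auto
  hence neSs: "Ss \<noteq> {}" using inSs by blast
  define a where "a = Min Ss"
  define b where "b = Max Ss"
  have aS: "a \<in> Ss" unfolding a_def using finSs neSs by (rule Min_in)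
  have bS: "b \<in> Ss" unfolding b_def using finSs neSs by (rule Max_in)
  have ale: "a \<le> \<tau>" if "\<tau> \<in> Ss" for \<tau> unfolding a_def using finSs that by simp
  have ble: "\<tau> \<le> b" if "\<tau> \<in> Ss" for \<tau> unfolding b_def using finSs that by simp
  have inseg: "sg \<tau> = s" if "a \<le> \<tau>" "\<tau> \<le> b" for \<tau>
    using sg_mono[OF that(1)] sg_mono[OF that(2)] aS bS unfolding Ss_def by auto
  have bl: "b \<le> length es" using bS unfolding Ss_def by simp
  define RV where "RV = {v. \<exists>\<tau><length es. sg \<tau> = s \<and> es!\<tau> = (p, Recv v)}"
  define SV where "SV = {v. \<exists>\<tau><length es. sg \<tau> = s \<and> (\<exists>q. es!\<tau> = (p, Send q v))}"
  define In where "In = fst (f a) p \<union> RV"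
  define W where "W = fst (f b) p \<union> SV"
  define X where "X = XIn -` In"
  define A where "A k = (\<lambda>(x,r). AIn k x r) -` In" for k
  define B where "B = key n ` W"
  define C where "C k = (if k = n then B else A k)" for k
  define TR where "TR = {\<tau>. \<tau> < length es \<and> sg \<tau> = s \<and> (\<exists>v. es!\<tau> = (p, Recv v))}"
  define TS where "TS = {\<tau>. \<tau> < length es \<and> sg \<tau> = s \<and> (\<exists>q v. es!\<tau> = (p, Send q v))}"
  define g where "g \<tau> = (case snd (es!\<tau>) of Recv v \<Rightarrow> v | Send q v \<Rightarrow> v | _ \<Rightarrow> XIn [])" for \<tau>
  have fTR: "finite TR" "finite TS" unfolding TR_def TS_def by auto
  have RVs: "RV \<subseteq> g ` TR"
  proof
    fix v assume "v \<in> RV"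
    then obtain \<tau> where "\<tau> < length es" "sg \<tau> = s" "es!\<tau> = (p, Recv v)" unfolding RV_def by blast
    then show "v \<in> g ` TR" unfolding TR_def g_def by (intro image_eqI[where x=\<tau>]) auto
  qed
  have SVs: "SV \<subseteq> g ` TS"
  proof
    fix v assume "v \<in> SV"
    then obtain \<tau> q where "\<tau> < length es" "sg \<tau> = s" "es!\<tau> = (p, Send q v)" unfolding SV_def by blast
    then show "v \<in> g ` TS" unfolding TS_def g_def by (intro image_eqI[where x=\<tau>]) auto
  qed
  have cRV: "card RV \<le> card TR"
    using card_mono[OF finite_imageI[OF fTR(1)] RVs] card_image_le[OF fTR(1), of g] by linarith
  have cSV: "card SV \<le> card TS"
    using card_mono[OF finite_imageI[OF fTR(2)] SVs] card_image_le[OF fTR(2), of g] by linarith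
  have finRV: "finite RV" using finite_subset[OF RVs finite_imageI[OF fTR(1)]] .
  have finSV: "finite SV" using finite_subset[OF SVs finite_imageI[OF fTR(2)]] .
  have disj: "TR \<inter> TS = {}" unfolding TR_def TS_def by auto
  have TRS: "TR \<union> TS \<subseteq> {\<tau>. \<tau> < length es \<and> pc p (es!\<tau>) \<and> cnt es p \<tau> div M = s}"
    unfolding TR_def TS_def sg_def by (auto simp: pc_def is_comm_def)
  have "card TR + card TS = card (TR \<union> TS)" using fTR disj by (simp add: card_Un_disjoint)
  also have "\<dots> \<le> M"
  proof -
    have "finite {\<tau>. \<tau> < length es \<and> pc p (es!\<tau>) \<and> cnt es p \<tau> div M = s}" by simp
    then show ?thesis using card_mono[OF _ TRS] card_comm_seg[OF M0, of es p s] by linarith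
  qed
  finally have cTRS: "card TR + card TS \<le> M" .
  have memA: "finite (fst (f a) p) \<and> card (fst (f a) p) \<le> M"
    using mok[of a] aS pP unfolding Ss_def mem_ok_def by auto
  have memB: "finite (fst (f b) p) \<and> card (fst (f b) p) \<le> M"
    using mok[of b] bS pP unfolding Ss_def mem_ok_def by auto
  have finIn: "finite In" unfolding In_def using memA finRV by simp
  have finW: "finite W" unfolding W_def using memB finSV by simp
  have cIn: "card In \<le> M + card RV" unfolding In_def using memA card_Un_le[of "fst (f a) p" RV] by linarith
  have cW: "card W \<le> M + card SV" unfolding W_def using memB card_Un_le[of "fst (f b) p" SV] by linarith
  have cB: "card B \<le> card W" unfolding B_def by (rule card_image_le[OF finW])
  have injX: "inj XIn" by (simp add: inj_def)
  have injA: "inj (\<lambda>(x,r). AIn k x r)" for k by (auto simp: inj_def)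
  have finX: "finite X" unfolding X_def using finIn injX by (rule finite_vimageI)
  have finA: "finite (A k)" for k unfolding A_def using finIn injA by (rule finite_vimageI)
  define K where "K = {..<N} - {n}"
  have finK: "finite K" unfolding K_def by simp
  define U where "U = XIn ` X \<union> (\<Union>k\<in>K. (\<lambda>(x,r). AIn k x r) ` A k)"
  have UIn: "U \<subseteq> In" unfolding U_def X_def A_def by auto
  have cU1: "card (\<Union>k\<in>K. (\<lambda>(x,r). AIn k x r) ` A k) = (\<Sum>k\<in>K. card ((\<lambda>(x,r). AIn k x r) ` A k))"
    using finK finA by (intro card_UN_disjoint) auto
  have cU2: "card ((\<lambda>(x,r). AIn k x r) ` A k) = card (A k)" for k
    using injA by (intro card_image) (auto simp: inj_def inj_on_def)
  have "card U = card (XIn ` X) + card (\<Union>k\<in>K. (\<lambda>(x,r). AIn k x r) ` A k)"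
    unfolding U_def using finX finK finA by (intro card_Un_disjoint) auto
  also have "\<dots> = card X + (\<Sum>k\<in>K. card (A k))"
    using cU1 cU2 injX by (simp add: card_image inj_on_def)
  finally have cXA: "card X + (\<Sum>k\<in>K. card (A k)) \<le> card In"
    using card_mono[OF finIn UIn] by simp
  have sumC: "(\<Sum>k<N. card (C k)) = card B + (\<Sum>k\<in>K. card (A k))"
  proof -
    have "(\<Sum>k<N. card (C k)) = card (C n) + (\<Sum>k\<in>K. card (C k))"
      unfolding K_def using nN N_def by (intro sum.remove) auto
    also have "(\<Sum>k\<in>K. card (C k)) = (\<Sum>k\<in>K. card (A k))"
      unfolding K_def C_def by (intro sum.cong) auto
    finally show ?thesis by (simp add: C_def)
  qed
  have GS: "Gs \<subseteq> {(i,r). i\<in>X \<and> r<R \<and> length i = N \<and> (\<forall>k<N. (i!k,r) \<in> C k)}"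
  proof
    fix ir assume irG: "ir \<in> Gs"
    obtain i r where ire: "ir = (i,r)" by (cases ir)
    have iG: "(i,r) \<in> Gs" using irG ire by simp
    define t where "t = tm (i,r)"
    have t: "t < length es" "es!t = (p, Mult i r)" using tmG[OF iG] t_def by auto
    have tS: "t \<in> Ss" "Suc t \<in> Ss" using inSs[OF iG] t_def by auto
    have at: "a \<le> t" using ale[OF tS(1)] .
    have tb: "Suc t \<le> b" using ble[OF tS(2)] .
    have sm: "i \<in> idx_space dims \<and> r < R \<and> XIn i \<in> fst (f t) p \<and> (\<forall>k<length dims. k \<noteq> n \<longrightarrow> AIn k (i!k) r \<in> fst (f t) p)"
      using step_mult[of dims R n P "f t" p i r] stp[OF t(1)] t(2) by simp
    have inp: "x \<in> In" if "is_input x" "x \<in> fst (f t) p" for x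
    proof -
      from input_prov[OF that(1) at _ that(2)] t(1)
      consider "x \<in> fst (f a) p" | \<tau> where "a \<le> \<tau>" "\<tau> < t" "es!\<tau> = (p, Recv x)" by fastforce
      then show ?thesis
      proof cases
        case 1 then show ?thesis unfolding In_def by simp
      next
        case 2
        have "sg \<tau> = s" using inseg[of \<tau>] 2 tb by simp
        then show ?thesis unfolding In_def RV_def using 2 t(1) by auto
      qed
    qed
    have len: "length i = N" using sm unfolding idx_space_def N_def by simp
    have Xi: "i \<in> X" using inp[of "XIn i"] sm unfolding X_def by simp
    have Bi: "(i!n, r) \<in> B"
    proof -
      from flow[OF iG, of b] tb bl t_def obtain v' where v':
        "(i,r) \<in># prods v'" "\<forall>x\<in>#prods v'. fst x ! n = i!n \<and> snd x = r"
        "v' \<in> fst (f b) p \<or> (\<exists>t' q. t \<le> t' \<and> t' < b \<and> es!t' = (p, Send q v'))" by auto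
      have k: "key n v' = (i!n, r)" using key_eq[OF v'(1,2)] .
      have "v' \<in> W"
      proof (cases "v' \<in> fst (f b) p")
        case True then show ?thesis unfolding W_def by simp
      next
        case False
        then obtain t' q where "t \<le> t'" "t' < b" "es!t' = (p, Send q v')" using v'(3) by blast
        moreover have "sg t' = s" using inseg[of t'] calculation at by simp
        ultimately show ?thesis unfolding W_def SV_def using bl by auto
      qed
      then show ?thesis unfolding B_def using k by (metis image_eqI)
    qed
    have Ck: "(i!k, r) \<in> C k" if "k < N" for k
    proof (cases "k = n")
      case True then show ?thesis using Bi unfolding C_def by simp
    next
      case False
      have "AIn k (i!k) r \<in> In" using inp[of "AIn k (i!k) r"] sm that False N_def by simp
      then show ?thesis using False unfolding C_def A_def by simp
    qed
    show "ir \<in> {(i,r). i\<in>X \<and> r<R \<and> length i = N \<and> (\<forall>k<N. (i!k,r) \<in> C k)}"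
      using ire Xi sm len Ck by simp
  qed
  have finC: "\<forall>k<N. finite (C k)" unfolding C_def B_def using finA finW by simp
  have N1': "N \<ge> 1" using N1 N_def by simp
  have cmb: "real (card Gs) \<le> real (card X) powr (1 - 1/N) * (\<Sum>k<N. real (card (C k))) / N"
    by (rule combo[OF N1' finX finC GS])
  have "card X + (\<Sum>k<N. card (C k)) \<le> 3 * M"
    using sumC cXA cB cW cIn cRV cSV cTRS by linarith
  hence xy: "real (card X) + (\<Sum>k<N. real (card (C k))) \<le> 3 * real M"
    by (simp flip: of_nat_sum)
  have "real (card X) powr (1 - 1/N) * (\<Sum>k<N. real (card (C k))) / N \<le> (3 * real M) powr (2 - 1/N) / N"
    using xy N1' by (intro final_arith) (auto intro: sum_nonneg)
  then show ?thesis using cmb N_def by simp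
qed

end


context exec begin

lemma proc_bound:
  fixes p :: nat and G :: "(nat list \<times> nat) set" and tm :: "nat list \<times> nat \<Rightarrow> nat"
  assumes pP: "p < P" and M0: "M > 0" and N1: "length dims \<ge> 1" and nN: "n < length dims"
    and tmG: "\<And>i r. (i,r) \<in> G \<Longrightarrow> tm (i,r) < length es \<and> es!tm (i,r) = (p, Mult i r)"
    and flow: "\<And>i r \<tau>'. (i,r) \<in> G \<Longrightarrow> tm (i,r) < \<tau>' \<Longrightarrow> \<tau>' \<le> length es \<Longrightarrow>
        \<exists>v'. (i,r) \<in># prods v' \<and> (\<forall>x\<in>#prods v'. fst x ! n = i!n \<and> snd x = r) \<and>
          (v' \<in> fst (f \<tau>') p \<or> (\<exists>t' q. tm (i,r) \<le> t' \<and> t' < \<tau>' \<and> es!t' = (p, Send q v')))"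
  shows "real (card G) \<le> (real (comm_count es p div M) + 1) * ((3 * real M) powr (2 - 1/length dims) / length dims)"
proof -
  define D where "D = comm_count es p div M"
  define Gs where "Gs s = {x\<in>G. cnt es p (tm x) div M = s}" for s
  have GU: "G = (\<Union>s\<in>{..D}. Gs s)"
  proof
    show "G \<subseteq> (\<Union>s\<in>{..D}. Gs s)"
    proof
      fix x assume xG: "x \<in> G"
      obtain i r where xe: "x = (i,r)" by (cases x)
      have "tm x \<le> length es" using tmG[of i r] xG xe by auto
      hence "cnt es p (tm x) \<le> comm_count es p" using cnt_mono[of "tm x" "length es" es p] cnt_all by simp
      hence "cnt es p (tm x) div M \<le> D" unfolding D_def by (rule div_le_mono)
      then show "x \<in> (\<Union>s\<in>{..D}. Gs s)" using xG unfolding Gs_def by auto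
    qed
  qed (auto simp: Gs_def)
  have each: "real (card (Gs s)) \<le> (3 * real M) powr (2 - 1/length dims) / length dims" for s
  proof (rule seg_bound[OF pP M0 N1 nN, of "Gs s" tm s])
    fix i r assume "(i,r) \<in> Gs s"
    then show "tm (i,r) < length es \<and> es!tm (i,r) = (p, Mult i r) \<and> cnt es p (tm (i,r)) div M = s"
      using tmG unfolding Gs_def by auto
  next
    fix i r \<tau>' assume "(i,r) \<in> Gs s" "tm (i,r) < \<tau>'" "\<tau>' \<le> length es"
    then show "\<exists>v'. (i,r) \<in># prods v' \<and> (\<forall>x\<in>#prods v'. fst x ! n = i!n \<and> snd x = r) \<and>
          (v' \<in> fst (f \<tau>') p \<or> (\<exists>t' q. tm (i,r) \<le> t' \<and> t' < \<tau>' \<and> es!t' = (p, Send q v')))"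
      using flow unfolding Gs_def by auto
  qed
  have "card G \<le> (\<Sum>s\<in>{..D}. card (Gs s))" using GU card_UN_le[of "{..D}" Gs] by simp
  hence "real (card G) \<le> (\<Sum>s\<in>{..D}. real (card (Gs s)))" by (simp flip: of_nat_sum)
  also have "\<dots> \<le> (\<Sum>s\<in>{..D}. (3 * real M) powr (2 - 1/length dims) / length dims)"
    by (intro sum_mono each)
  also have "\<dots> = (real D + 1) * ((3 * real M) powr (2 - 1/length dims) / length dims)" by simp
  finally show ?thesis unfolding D_def .
qed

end


lemma idx_Nil: "idx_space [] = {[]}" unfolding idx_space_def by auto

lemma idx_Cons: "idx_space (d#ds) = (\<lambda>(x,xs). x#xs) ` ({..<d} \<times> idx_space ds)"
proof
  show "idx_space (d#ds) \<subseteq> (\<lambda>(x,xs). x#xs) ` ({..<d} \<times> idx_space ds)"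
  proof
    fix i assume i: "i \<in> idx_space (d#ds)"
    then obtain x xs where ie: "i = x#xs" unfolding idx_space_def by (cases i) auto
    have l: "length xs = length ds" using i ie unfolding idx_space_def by simp
    have a: "\<forall>k<Suc (length ds). (x#xs)!k < (d#ds)!k" using i ie unfolding idx_space_def by simp
    have "x < d" using a[rule_format, of 0] by simp
    moreover have "xs ! k < ds ! k" if "k < length ds" for k using a[rule_format, of "Suc k"] that by simp
    ultimately show "i \<in> (\<lambda>(x,xs). x#xs) ` ({..<d} \<times> idx_space ds)"
      using ie l unfolding idx_space_def by (intro image_eqI[where x="(x,xs)"]) auto
  qed
next
  show "(\<lambda>(x,xs). x#xs) ` ({..<d} \<times> idx_space ds) \<subseteq> idx_space (d#ds)"
    unfolding idx_space_def by (auto simp: nth_Cons split: nat.splits)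
qed

lemma idx_card: "finite (idx_space dims) \<and> card (idx_space dims) = prod_list dims"
proof (induction dims)
  case Nil then show ?case by (simp add: idx_Nil)
next
  case (Cons d ds)
  have inj: "inj_on (\<lambda>(x,xs). x#xs) ({..<d} \<times> idx_space ds)" by (auto simp: inj_on_def)
  show ?case using Cons inj by (simp add: idx_Cons card_image card_cartesian_product)
qed

lemma final_ineq:
  fixes C g IR M P Nr \<alpha> \<beta> d :: real
  assumes "M > 0" "P > 0" "Nr > 0" "\<alpha> > 0" "\<beta> > 0" "IR \<le> P * g"
    "g \<le> (d + 1) * (\<alpha> * \<beta> * M / Nr)" "d \<le> C / M"
  shows "1 / \<alpha> * (Nr * IR) / (P * \<beta>) - M \<le> C"
proof -
  have "g \<le> (C / M + 1) * (\<alpha> * \<beta> * M / Nr)"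
    using assms by (smt (verit) mult_right_mono divide_nonneg_pos mult_pos_pos)
  also have "\<dots> = (C + M) * \<alpha> * \<beta> / Nr" using assms by (simp add: field_simps)
  finally have g: "g * Nr \<le> (C + M) * \<alpha> * \<beta>" using assms by (simp add: field_simps)
  have "Nr * IR \<le> Nr * (P * g)" using assms by simp
  also have "\<dots> \<le> P * ((C + M) * \<alpha> * \<beta>)" using g assms
    by (metis mult.commute mult.left_commute mult_left_mono less_eq_real_def)
  finally have h: "Nr * IR \<le> P * ((C + M) * \<alpha> * \<beta>)" .
  have "1 / \<alpha> * (Nr * IR) / (P * \<beta>) = (Nr * IR) / (P * \<alpha> * \<beta>)" by (simp add: field_simps)
  also have "\<dots> \<le> P * ((C + M) * \<alpha> * \<beta>) / (P * \<alpha> * \<beta>)"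
    using h assms by (intro divide_right_mono) auto
  also have "\<dots> = C + M" using assms by (simp add: field_simps)
  finally show ?thesis by simp
qed


theorem corollary1:
  fixes dims :: "nat list" and R n P M :: nat
    and mem0 :: "nat \<Rightarrow> val set" and es :: "(nat \<times> instr) list"
  assumes "length dims \<ge> 2"
    and "\<forall>k<length dims. dims ! k \<ge> 1"
    and "R \<ge> 1"
    and "n < length dims"
    and "is_mttkrp_alg dims R n P M mem0 es"
  shows "\<exists>p<P. real (comm_count es p) \<ge>
           1 / 3 powr (2 - 1 / real (length dims))
             * (real (length dims) * real (prod_list dims) * real R)
             / (real P * real M powr (1 - 1 / real (length dims)))
           - real M"
proof -
  note nN = assms(4)
  from assms(5) obtain s where mo0: "mem_ok P M mem0" and inp: "\<forall>p<P. \<forall>v\<in>mem0 p. is_input v"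
    and run: "run dims R n P M (mem0, {}) es = Some s"
    and out: "\<forall>j<dims ! n. \<forall>r<R. \<exists>p<P. \<exists>t\<in>fst s p. computes_output dims n j r t"
    unfolding is_mttkrp_alg_def by blast
  from run_trace[OF run] obtain f where f0: "f 0 = (mem0, {})" and fT: "f (length es) = s"
    and fs: "\<forall>\<tau><length es. step dims R n P (f \<tau>) (es!\<tau>) = Some (f (Suc \<tau>)) \<and> mem_ok P M (fst (f (Suc \<tau>)))"
    by blast
  interpret E: exec dims R n P M es f
  proof
    show "\<And>\<tau>. \<tau> < length es \<Longrightarrow> step dims R n P (f \<tau>) (es!\<tau>) = Some (f (Suc \<tau>))" using fs by blast
    show "mem_ok P M (fst (f \<tau>))" if "\<tau> \<le> length es" for \<tau>
    proof (cases \<tau>)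
      case 0 then show ?thesis using mo0 f0 by simp
    next
      case (Suc t) then show ?thesis using fs that by auto
    qed
    show "\<And>p v. p < P \<Longrightarrow> v \<in> fst (f 0) p \<Longrightarrow> is_input v" using inp f0 by simp
    show "snd (f 0) = {}" using f0 by simp
  qed
  have dn: "dims ! n \<ge> 1" using assms(2) nN by simp
  obtain p00 where "p00 < P" using out dn assms(3) by (meson less_le_trans zero_less_one)
  hence P0: "P > 0" by simp
  show ?thesis
  proof (cases "M = 0")
    case True
    then show ?thesis using P0 assms(1) by (intro exI[of _ 0]) auto
  next
    case False
    hence M0: "M > 0" by simp
    define N where "N = length dims"
    have N1: "length dims \<ge> 1" using assms(1) by simp
    define Pts where "Pts = idx_space dims \<times> {..<R}"
    define FL where "FL p t i r \<longleftrightarrow> (\<forall>\<tau>'. t < \<tau>' \<longrightarrow> \<tau>' \<le> length es \<longrightarrow>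
        (\<exists>v'. (i,r) \<in># prods v' \<and> (\<forall>x\<in>#prods v'. fst x ! n = i!n \<and> snd x = r) \<and>
          (v' \<in> fst (f \<tau>') p \<or> (\<exists>t' q. t \<le> t' \<and> t' < \<tau>' \<and> es!t' = (p, Send q v')))))" for p t i r
    have ex: "\<exists>t p. t < length es \<and> es!t = (p, Mult i r) \<and> FL p t i r" if "(i,r) \<in> Pts" for i r
    proof -
      have i: "i \<in> idx_space dims" and r: "r < R" using that unfolding Pts_def by auto
      have j: "i!n < dims!n" using i nN unfolding idx_space_def by auto
      from out j r obtain q v where q: "q < P" "v \<in> fst s q" "computes_output dims n (i!n) r v" by blast
      have fin: "finite ((\<lambda>i. (i, r)) ` {i' \<in> idx_space dims. i' ! n = i!n})"
        using idx_card[of dims] by simp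
      have pv: "prods v = mset_set ((\<lambda>i. (i, r)) ` {i' \<in> idx_space dims. i' ! n = i!n})" "pure_sum v"
        using q(3) unfolding computes_output_def by auto
      have irv: "(i,r) \<in># prods v" using pv(1) fin i by auto
      have allv: "\<forall>x\<in>#prods v. fst x ! n = i!n \<and> snd x = r" using pv(1) fin by auto
      have vin: "v \<in> fst (f (length es)) q" using q fT by simp
      from E.back_flow[OF order_refl q(1) vin pv(2) irv] obtain t p where
        tp: "t < length es" "es!t = (p, Mult i r)"
        "\<forall>\<tau>'. t < \<tau>' \<and> \<tau>' \<le> length es \<longrightarrow> E.Mp i r p v \<tau>' \<or> E.Sp i r p t v \<tau>'" by blast
      have "FL p t i r" unfolding FL_def
      proof (intro allI impI)
        fix \<tau>' assume a: "t < \<tau>'" "\<tau>' \<le> length es"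
        have sub: "\<forall>x\<in>#prods v'. fst x ! n = i!n \<and> snd x = r" if "v' \<in> subv v" for v'
          using allv subv_prods[OF that] by (meson mset_subset_eqD)
        from tp(3) a have "E.Mp i r p v \<tau>' \<or> E.Sp i r p t v \<tau>'" by blast
        then show "\<exists>v'. (i,r) \<in># prods v' \<and> (\<forall>x\<in>#prods v'. fst x ! n = i!n \<and> snd x = r) \<and>
          (v' \<in> fst (f \<tau>') p \<or> (\<exists>t' q. t \<le> t' \<and> t' < \<tau>' \<and> es!t' = (p, Send q v')))"
        proof
          assume "E.Mp i r p v \<tau>'"
          then obtain v' where "v' \<in> subv v" "(i,r) \<in># prods v'" "v' \<in> fst (f \<tau>') p"
            unfolding E.Mp_def by blast
          then show ?thesis using sub by blast
        next
          assume "E.Sp i r p t v \<tau>'"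
          then obtain t' q' v' where "t \<le> t'" "t' < \<tau>'" "es!t' = (p, Send q' v')" "v' \<in> subv v" "(i,r) \<in># prods v'"
            unfolding E.Sp_def by blast
          then show ?thesis using sub by blast
        qed
      qed
      then show ?thesis using tp by blast
    qed
    define tm where "tm pt = (SOME t. \<exists>p. t < length es \<and> es!t = (p, Mult (fst pt) (snd pt)) \<and> FL p t (fst pt) (snd pt))" for pt
    define own where "own pt = fst (es ! tm pt)" for pt
    have tmP: "tm (i,r) < length es \<and> es!tm (i,r) = (own (i,r), Mult i r) \<and> FL (own (i,r)) (tm (i,r)) i r"
      if "(i,r) \<in> Pts" for i r
    proof -
      have "\<exists>p. tm (i,r) < length es \<and> es!tm (i,r) = (p, Mult i r) \<and> FL p (tm (i,r)) i r"
        unfolding tm_def using someI_ex[OF ex[OF that]] by simp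
      then show ?thesis unfolding own_def by auto
    qed
    have ownP: "own pt < P" if "pt \<in> Pts" for pt
    proof -
      obtain i r where pe: "pt = (i,r)" by (cases pt)
      have "step dims R n P (f (tm (i,r))) (own (i,r), Mult i r) = Some (f (Suc (tm (i,r))))"
      proof -
        have t: "tm (i,r) < length es" "es!tm (i,r) = (own (i,r), Mult i r)" using tmP[of i r] that pe by auto
        show ?thesis using E.stp[OF t(1)] t(2) by simp
      qed
      then show ?thesis using pe step_P by blast
    qed
    define G where "G p = {pt \<in> Pts. own pt = p}" for p
    have finPts: "finite Pts" unfolding Pts_def using idx_card[of dims] by simp
    have cPts: "card Pts = prod_list dims * R" unfolding Pts_def using idx_card[of dims]
      by (simp add: card_cartesian_product)
    have PU: "Pts = (\<Union>p<P. G p)" unfolding G_def using ownP by auto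
    have "card Pts = (\<Sum>p<P. card (G p))"
      unfolding PU using finPts by (intro card_UN_disjoint) (auto simp: G_def)
    then obtain p where pP: "p < P" and pc: "card Pts \<le> P * card (G p)"
    proof -
      assume h: "\<And>p. p < P \<Longrightarrow> card Pts \<le> P * card (G p) \<Longrightarrow> thesis"
      show thesis
      proof (rule ccontr)
        assume "\<not> thesis"
        hence lt: "P * card (G p) < card Pts" if "p < P" for p using h that by force
        have "(\<Sum>p<P. P * card (G p)) < (\<Sum>p<P. card Pts)"
          using P0 lt by (intro sum_strict_mono) auto
        hence "P * (\<Sum>p<P. card (G p)) < P * card Pts" by (simp add: sum_distrib_left)
        thus False using \<open>card Pts = (\<Sum>p<P. card (G p))\<close> by simp
      qed
    qed
    have pb: "real (card (G p)) \<le> (real (comm_count es p div M) + 1) * ((3 * real M) powr (2 - 1/length dims) / length dims)"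
    proof (rule E.proc_bound[OF pP M0 N1 nN, of "G p" tm])
      fix i r assume "(i,r) \<in> G p"
      then show "tm (i,r) < length es \<and> es!tm (i,r) = (p, Mult i r)" using tmP unfolding G_def by auto
    next
      fix i r \<tau>' assume a: "(i,r) \<in> G p" "tm (i,r) < \<tau>'" "\<tau>' \<le> length es"
      have "FL p (tm (i,r)) i r" using tmP[of i r] a(1) unfolding G_def by auto
      then show "\<exists>v'. (i,r) \<in># prods v' \<and> (\<forall>x\<in>#prods v'. fst x ! n = i!n \<and> snd x = r) \<and>
          (v' \<in> fst (f \<tau>') p \<or> (\<exists>t' q. tm (i,r) \<le> t' \<and> t' < \<tau>' \<and> es!t' = (p, Send q v')))"
        using a unfolding FL_def by blast
    qed
    have K: "(3 * real M) powr (2 - 1/length dims) =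
        3 powr (2 - 1/length dims) * real M powr (1 - 1/length dims) * real M"
    proof -
      have "(3 * real M) powr (2 - 1/length dims) = 3 powr (2 - 1/length dims) * real M powr (2 - 1/length dims)"
        by (simp add: powr_mult)
      also have "real M powr (2 - 1/length dims) = real M powr ((1 - 1/length dims) + 1)" by simp
      also have "\<dots> = real M powr (1 - 1/length dims) * real M powr 1" by (rule powr_add)
      also have "\<dots> = real M powr (1 - 1/length dims) * real M" using M0 by simp
      finally show ?thesis by simp
    qed
    have IR: "real (prod_list dims) * real R \<le> real P * real (card (G p))"
      using pc cPts by (metis of_nat_le_iff of_nat_mult)
    have "1 / 3 powr (2 - 1 / real (length dims)) * (real (length dims) * (real (prod_list dims) * real R))
             / (real P * real M powr (1 - 1 / real (length dims))) - real M \<le> real (comm_count es p)"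
    proof (rule final_ineq[where g = "real (card (G p))" and d = "real (comm_count es p div M)"])
      show "real (card (G p)) \<le> (real (comm_count es p div M) + 1) *
          (3 powr (2 - 1/length dims) * real M powr (1 - 1/length dims) * real M / real (length dims))"
        using pb K by simp
      show "real (comm_count es p div M) \<le> real (comm_count es p) / real M" by (rule of_nat_div_le_of_nat)
    qed (use M0 P0 N1 IR in auto)
    then show ?thesis using pP by (intro exI[of _ p]) (simp add: mult.assoc)
  qed
qed


end
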